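(* Let $E$ be a finite-dimensional real vector space of dimension $p$ with dual $E^{*}$, and let $h$ be a generalized affine function on $E$ that is finite at at least one point. Represent $h$ as in the context by linearly independent $\eta_1,\dots,\eta_j\in E^{*}$ and scalars $\delta_1,\dots,\delta_j$, and extend $\eta_1,\dots,\eta_j$ to a basis $\eta_1,\dots,\eta_p$ of $E^{*}$. Suppose $h_n$ is a sequence of (real-valued) affine functions on $E$ converging pointwise to $h$. Then there are sequences of scalars $a_n$ and $b_{i,n}$ such that $$h_n(y)=a_n+\sum_{i=1}^{j}b_{i,n}\big(\langle y,\eta_i\rangle-\delta_i\big)+\sum_{i=j+1}^{p}b_{i,n}\langle y,\eta_i\rangle,\qquad y\in E,$$ and, as $n\to\infty$: (a) $b_{i,n}\to\infty$ for $1\le i\le j$; (b) $b_{i,n}/b_{i-1,n}\to0$ for $2\le i\le j$; (c) $b_{i,n}$ converges for $i>j$; (d) $a_n$ converges.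
   Context: A generalized affine function is a function $E\to\mathbb{R}\cup\{\pm\infty\}$ that is both convex and concave. Representation: linearly independent $\eta_1,\dots,\eta_j\in E^{*}$ ($j\ge0$) and scalars $\delta_i$, with $H_0=E$, $H_i=\{y\in H_{i-1}:\langle y,\eta_i\rangle=\delta_i\}$, $C_i^{+}=\{y\in H_{i-1}:\langle y,\eta_i\rangle>\delta_i\}$, $C_i^{-}=\{y\in H_{i-1}:\langle y,\eta_i\rangle<\delta_i\}$, all nonempty, such that $h=+\infty$ on each $C_i^{+}$, $h=-\infty$ on each $C_i^{-}$, and $h$ is affine or constant (possibly $\pm\infty$) on $H_j$ (every generalized affine function has such a representation). Empty sums are zero. *)

theory Defs
  imports "HOL-Analysis.Analysis"
begin

definition ereal_convex_fun :: "('a::real_vector \<Rightarrow> ereal) \<Rightarrow> bool" where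
  "ereal_convex_fun h \<longleftrightarrow> convex {(x, t::real). h x \<le> ereal t}"

definition ereal_concave_fun :: "('a::real_vector \<Rightarrow> ereal) \<Rightarrow> bool" where
  "ereal_concave_fun h \<longleftrightarrow> convex {(x, t::real). ereal t \<le> h x}"

definition generalized_affine :: "('a::real_vector \<Rightarrow> ereal) \<Rightarrow> bool" where
  "generalized_affine h \<longleftrightarrow> ereal_convex_fun h \<and> ereal_concave_fun h"

text \<open>The flats \<open>H_i\<close> and open half-flats \<open>C_i^+\<close>, \<open>C_i^-\<close> of the representation;
  the dual pairing \<open>\<langle>y,\<eta>\<rangle>\<close> is the inner product \<open>y \<bullet> \<eta>\<close>.\<close>

definition Hflat :: "(nat \<Rightarrow> 'a::real_inner) \<Rightarrow> (nat \<Rightarrow> real) \<Rightarrow> nat \<Rightarrow> 'a set" where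
  "Hflat \<eta> \<delta> i = {y. \<forall>k\<in>{1..i}. y \<bullet> \<eta> k = \<delta> k}"

definition Cplus :: "(nat \<Rightarrow> 'a::real_inner) \<Rightarrow> (nat \<Rightarrow> real) \<Rightarrow> nat \<Rightarrow> 'a set" where
  "Cplus \<eta> \<delta> i = {y \<in> Hflat \<eta> \<delta> (i - 1). y \<bullet> \<eta> i > \<delta> i}"

definition Cminus :: "(nat \<Rightarrow> 'a::real_inner) \<Rightarrow> (nat \<Rightarrow> real) \<Rightarrow> nat \<Rightarrow> 'a set" where
  "Cminus \<eta> \<delta> i = {y \<in> Hflat \<eta> \<delta> (i - 1). y \<bullet> \<eta> i < \<delta> i}"

end

theory Submission
  imports Defs
begin

lemma dual_exists:
  fixes \<eta> :: "nat \<Rightarrow> 'a::euclidean_space"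
  assumes "p = DIM('a)" "span (\<eta>`{1..p}) = UNIV" "i \<in> {1..p}"
  shows "\<exists>e. e \<bullet> \<eta> i = 1 \<and> (\<forall>k\<in>{1..p}. k \<noteq> i \<longrightarrow> e \<bullet> \<eta> k = 0)"
proof -
  define S where "S = \<eta>`({1..p}-{i})"
  have "dim S \<le> card S" by (rule dim_le_card) (auto simp: S_def span_superset)
  also have "\<dots> \<le> card ({1..p}-{i})" unfolding S_def by (rule card_image_le) simp
  also have "\<dots> < p" using assms(3) by simp
  finally have "dim S < DIM('a)" using assms(1) by simp
  then obtain x where x: "x \<noteq> 0" "\<And>y. y \<in> span S \<Longrightarrow> orthogonal x y"
    using orthogonal_to_subspace_exists by blast
  have ne: "x \<bullet> \<eta> i \<noteq> 0"
  proof
    assume z: "x \<bullet> \<eta> i = 0"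
    have "orthogonal x y" if yin: "y \<in> \<eta>`{1..p}" for y
    proof -
      obtain k where k: "k \<in> {1..p}" "y = \<eta> k" using yin by blast
      show ?thesis
      proof (cases "k = i")
        case True then show ?thesis using z k by (simp add: orthogonal_def)
      next
        case False then have "y \<in> span S" using k by (auto simp: S_def intro!: span_base)
        then show ?thesis using x by blast
      qed
    qed
    then have "orthogonal x x" using orthogonal_to_span[of x "\<eta>`{1..p}" x] assms(2) by auto
    then show False using x by (simp add: orthogonal_def)
  qed
  define e where "e = x /\<^sub>R (x \<bullet> \<eta> i)"
  have "e \<bullet> \<eta> i = 1" using ne by (simp add: e_def)
  moreover have "e \<bullet> \<eta> k = 0" if "k \<in> {1..p}" "k \<noteq> i" for k
  proof -
    have "\<eta> k \<in> span S" using that by (auto simp: S_def intro!: span_base)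
    then have "x \<bullet> \<eta> k = 0" using x by (simp add: orthogonal_def)
    then show ?thesis by (simp add: e_def)
  qed
  ultimately show ?thesis by blast
qed

lemma coord_point:
  fixes \<eta> :: "nat \<Rightarrow> 'a::euclidean_space"
  assumes "p = DIM('a)" "span (\<eta>`{1..p}) = UNIV"
  shows "\<exists>Q. \<forall>z. \<forall>i\<in>{1..p}. Q z \<bullet> \<eta> i = z i"
proof -
  have "\<forall>i\<in>{1..p}. \<exists>e. e \<bullet> \<eta> i = 1 \<and> (\<forall>k\<in>{1..p}. k \<noteq> i \<longrightarrow> e \<bullet> \<eta> k = 0)"
    using dual_exists[OF assms] by blast
  then obtain e where e: "\<And>i. i\<in>{1..p} \<Longrightarrow> e i \<bullet> \<eta> i = 1 \<and> (\<forall>k\<in>{1..p}. k \<noteq> i \<longrightarrow> e i \<bullet> \<eta> k = 0)"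
    by metis
  have "(\<Sum>k\<in>{1..p}. z k *\<^sub>R e k) \<bullet> \<eta> i = z i" if "i \<in> {1..p}" for z i
  proof -
    have "(\<Sum>k\<in>{1..p}. z k *\<^sub>R e k) \<bullet> \<eta> i = (\<Sum>k\<in>{1..p}. if k = i then z k else 0)"
      unfolding inner_sum_left
      by (rule sum.cong) (use e that in auto)
    also have "\<dots> = z i" using that by simp
    finally show ?thesis .
  qed
  then show ?thesis by (intro exI[of _ "\<lambda>z. \<Sum>k\<in>{1..p}. z k *\<^sub>R e k"]) blast
qed

lemma repr:
  fixes \<eta> :: "nat \<Rightarrow> 'a::euclidean_space" and hn :: "nat \<Rightarrow> 'a \<Rightarrow> real"
  assumes "inj_on \<eta> {1..p}" "span (\<eta>`{1..p}) = UNIV"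
    and "\<forall>n. \<exists>f c. linear f \<and> hn n = (\<lambda>y. f y + c)"
  shows "\<exists>\<beta> c. \<forall>n y. hn n y = c n + (\<Sum>k\<in>{1..p}. \<beta> n k * (y \<bullet> \<eta> k))"
proof -
  have "\<exists>\<beta> c. \<forall>y. hn n y = c + (\<Sum>k\<in>{1..p}. \<beta> k * (y \<bullet> \<eta> k))" for n
  proof -
    obtain f c where fc: "linear f" "hn n = (\<lambda>y. f y + c)" using assms(3) by blast
    define w where "w = adjoint f 1"
    have fw: "f y = y \<bullet> w" for y
      using adjoint_works[OF fc(1), of y 1] by (simp add: w_def)
    have "w \<in> span (\<eta>`{1..p})" using assms(2) by simp
    then obtain u where u: "w = (\<Sum>v\<in>\<eta>`{1..p}. u v *\<^sub>R v)"
      by (auto simp: real_vector.span_finite)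
    also have "\<dots> = (\<Sum>k\<in>{1..p}. u (\<eta> k) *\<^sub>R \<eta> k)"
      using sum.reindex[OF assms(1), of "\<lambda>v. u v *\<^sub>R v"] by simp
    finally have "hn n y = c + (\<Sum>k\<in>{1..p}. u (\<eta> k) * (y \<bullet> \<eta> k))" for y
      using fc fw by (simp add: inner_sum_right)
    then show ?thesis by (intro exI[of _ "\<lambda>k. u (\<eta> k)"] exI[of _ c]) blast
  qed
  then show ?thesis by metis
qed
theorem lemma1:
  fixes h :: "'a::euclidean_space \<Rightarrow> ereal"
    and \<eta> :: "nat \<Rightarrow> 'a" and \<delta> :: "nat \<Rightarrow> real"
    and j p :: nat
    and hn :: "nat \<Rightarrow> 'a \<Rightarrow> real"
  assumes gaff: "generalized_affine h"
    and finite_pt: "\<exists>y. h y \<noteq> \<infinity> \<and> h y \<noteq> -\<infinity>"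
    and p_def: "p = DIM('a)"
    and j_le: "j \<le> p"
    and indep_j: "independent (\<eta> ` {1..j})" and inj_j: "inj_on \<eta> {1..j}"
    and Cp_ne: "\<forall>i\<in>{1..j}. Cplus \<eta> \<delta> i \<noteq> {}"
    and Cm_ne: "\<forall>i\<in>{1..j}. Cminus \<eta> \<delta> i \<noteq> {}"
    and h_plus: "\<forall>i\<in>{1..j}. \<forall>y\<in>Cplus \<eta> \<delta> i. h y = \<infinity>"
    and h_minus: "\<forall>i\<in>{1..j}. \<forall>y\<in>Cminus \<eta> \<delta> i. h y = -\<infinity>"
    and h_H: "(\<exists>c::ereal. \<forall>y\<in>Hflat \<eta> \<delta> j. h y = c)
              \<or> (\<exists>w c. \<forall>y\<in>Hflat \<eta> \<delta> j. h y = ereal (y \<bullet> w + c))"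
    and basis: "independent (\<eta> ` {1..p})" "inj_on \<eta> {1..p}" "span (\<eta> ` {1..p}) = UNIV"
    and hn_affine: "\<forall>n. \<exists>f c. linear f \<and> hn n = (\<lambda>y. f y + c)"
    and hn_lim: "\<forall>y. ((\<lambda>n. ereal (hn n y)) \<longlongrightarrow> h y) sequentially"
  shows "\<exists>(a :: nat \<Rightarrow> real) (b :: nat \<Rightarrow> nat \<Rightarrow> real).
     (\<forall>n y. hn n y = a n + (\<Sum>i=1..j. b i n * (y \<bullet> \<eta> i - \<delta> i))
                         + (\<Sum>i\<in>{j+1..p}. b i n * (y \<bullet> \<eta> i)))
   \<and> (\<forall>i\<in>{1..j}. filterlim (\<lambda>n. b i n) at_top sequentially)
   \<and> (\<forall>i\<in>{2..j}. ((\<lambda>n. b i n / b (i - 1) n) \<longlongrightarrow> 0) sequentially)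
   \<and> (\<forall>i\<in>{j+1..p}. convergent (\<lambda>n. b i n))
   \<and> convergent a"
proof -
  obtain Q where Q: "\<And>z i. i\<in>{1..p} \<Longrightarrow> Q z \<bullet> \<eta> i = z i"
    using coord_point[OF p_def basis(3)] by blast
  obtain \<beta> c where rep: "\<And>n y. hn n y = c n + (\<Sum>k\<in>{1..p}. \<beta> n k * (y \<bullet> \<eta> k))"
    using repr[OF basis(2) basis(3) hn_affine] by blast
  define b where "b = (\<lambda>i n. \<beta> n i)"
  define a where "a = (\<lambda>n. c n + (\<Sum>i=1..j. \<beta> n i * \<delta> i))"
  have form: "hn n y = a n + (\<Sum>i=1..j. b i n * (y \<bullet> \<eta> i - \<delta> i))
                         + (\<Sum>i\<in>{j+1..p}. b i n * (y \<bullet> \<eta> i))" for n y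
  proof -
    have split: "{1..p} = {1..j} \<union> {j+1..p}" using j_le by auto
    have "(\<Sum>k\<in>{1..p}. \<beta> n k * (y \<bullet> \<eta> k)) = (\<Sum>k\<in>{1..j}. \<beta> n k * (y \<bullet> \<eta> k))
          + (\<Sum>k\<in>{j+1..p}. \<beta> n k * (y \<bullet> \<eta> k))"
      unfolding split by (rule sum.union_disjoint) auto
    moreover have "(\<Sum>i=1..j. b i n * (y \<bullet> \<eta> i - \<delta> i)) = (\<Sum>k\<in>{1..j}. \<beta> n k * (y \<bullet> \<eta> k))
          - (\<Sum>i=1..j. \<beta> n i * \<delta> i)"
      by (simp add: b_def right_diff_distrib sum_subtractf)
    ultimately show ?thesis by (simp add: rep a_def b_def)
  qed
  define Z where "Z t = Q (\<lambda>k. (if k \<le> j then \<delta> k else 0) + t k)" for t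
  have ZH: "Z t \<bullet> \<eta> k = (if k \<le> j then \<delta> k else 0) + t k" if "k \<in> {1..p}" for t k
    unfolding Z_def using Q[OF that] .
  have Zval: "hn n (Z t) = a n + (\<Sum>i=1..j. b i n * t i) + (\<Sum>i\<in>{j+1..p}. b i n * t i)" for n t
  proof -
    have "(\<Sum>i=1..j. b i n * (Z t \<bullet> \<eta> i - \<delta> i)) = (\<Sum>i=1..j. b i n * t i)"
      by (rule sum.cong) (use j_le in \<open>auto simp: ZH\<close>)
    moreover have "(\<Sum>i\<in>{j+1..p}. b i n * (Z t \<bullet> \<eta> i)) = (\<Sum>i\<in>{j+1..p}. b i n * t i)"
      by (rule sum.cong) (auto simp: ZH)
    ultimately show ?thesis using form[of n "Z t"] by simp
  qed
  obtain y0 where y0: "h y0 \<noteq> \<infinity>" "h y0 \<noteq> -\<infinity>" using finite_pt by blast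
  have y0H: "y0 \<in> Hflat \<eta> \<delta> j"
  proof (rule ccontr)
    assume "y0 \<notin> Hflat \<eta> \<delta> j"
    then have ex: "\<exists>k. k \<in> {1..j} \<and> y0 \<bullet> \<eta> k \<noteq> \<delta> k" by (auto simp: Hflat_def)
    define m where "m = (LEAST k. k \<in> {1..j} \<and> y0 \<bullet> \<eta> k \<noteq> \<delta> k)"
    have m: "m \<in> {1..j}" "y0 \<bullet> \<eta> m \<noteq> \<delta> m"
      using LeastI_ex[OF ex] unfolding m_def by auto
    have "y0 \<bullet> \<eta> k = \<delta> k" if "k \<in> {1..m-1}" for k
    proof -
      have "k < m" using that m by auto
      then have "\<not> (k \<in> {1..j} \<and> y0 \<bullet> \<eta> k \<noteq> \<delta> k)" unfolding m_def by (rule not_less_Least)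
      then show ?thesis using that m by auto
    qed
    then have "y0 \<in> Hflat \<eta> \<delta> (m - 1)" by (auto simp: Hflat_def)
    then have "y0 \<in> Cplus \<eta> \<delta> m \<or> y0 \<in> Cminus \<eta> \<delta> m"
      using m(2) by (auto simp: Cplus_def Cminus_def)
    then show False using h_plus h_minus m(1) y0 by blast
  qed
  have fin: "\<exists>r. h y = ereal r" if "y \<in> Hflat \<eta> \<delta> j" for y
  proof -
    have "h y \<noteq> \<infinity> \<and> h y \<noteq> -\<infinity>"
      using h_H
    proof
      assume "\<exists>c::ereal. \<forall>y\<in>Hflat \<eta> \<delta> j. h y = c"
      then obtain c where "\<forall>y\<in>Hflat \<eta> \<delta> j. h y = c" by blast
      then show ?thesis using that y0H y0 by auto
    next
      assume "\<exists>w c. \<forall>y\<in>Hflat \<eta> \<delta> j. h y = ereal (y \<bullet> w + c)"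
      then show ?thesis using that by auto
    qed
    then show ?thesis by (cases "h y") auto
  qed
  have ZinH: "Z t \<in> Hflat \<eta> \<delta> j" if "\<And>k. k \<le> j \<Longrightarrow> t k = 0" for t
    using that j_le by (auto simp: Hflat_def ZH)
  obtain L where L: "a \<longlonglongrightarrow> L"
  proof -
    obtain r where r: "h (Z (\<lambda>k. 0)) = ereal r" using fin[OF ZinH[of "\<lambda>k. 0"]] by auto
    have "((\<lambda>n. ereal (hn n (Z (\<lambda>k. 0)))) \<longlongrightarrow> ereal r) sequentially"
      using hn_lim[rule_format, of "Z (\<lambda>k. 0)"] r by simp
    then have "a \<longlonglongrightarrow> r" by (simp add: Zval)
    then show ?thesis using that by blast
  qed
  define ei where "ei i = (\<lambda>k::nat. if k = i then 1 else (0::real))" for i :: nat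
  have sum_ei: "(\<Sum>k\<in>S. b k n * ei i k) = (if i \<in> S then b i n else 0)" if "finite S" for S i n
    using that by (simp add: ei_def if_distrib sum.delta cong: if_cong)
  have cC: "convergent (\<lambda>n. b i n)" if i: "i \<in> {j+1..p}" for i
  proof -
    have "Z (ei i) \<in> Hflat \<eta> \<delta> j" by (rule ZinH) (use i in \<open>auto simp: ei_def\<close>)
    then obtain r where r: "h (Z (ei i)) = ereal r" using fin by blast
    have "((\<lambda>n. ereal (hn n (Z (ei i)))) \<longlongrightarrow> ereal r) sequentially"
      using hn_lim[rule_format, of "Z (ei i)"] r by simp
    then have "(\<lambda>n. a n + b i n) \<longlonglongrightarrow> r" using i by (simp add: Zval sum_ei)
    from tendsto_diff[OF this L] have "(\<lambda>n. b i n) \<longlonglongrightarrow> r - L" by simp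
    then show ?thesis unfolding convergent_def by blast
  qed
  have aC: "filterlim (\<lambda>n. b i n) at_top sequentially" if i: "i \<in> {1..j}" for i
  proof -
    have "Z (ei i) \<in> Cplus \<eta> \<delta> i"
      using i j_le by (auto simp: Cplus_def Hflat_def ZH ei_def; linarith)
    then have "h (Z (ei i)) = \<infinity>" using h_plus i by blast
    then have "((\<lambda>n. ereal (hn n (Z (ei i)))) \<longlongrightarrow> \<infinity>) sequentially"
      using hn_lim[rule_format, of "Z (ei i)"] by simp
    then have "filterlim (\<lambda>n. a n + b i n) at_top sequentially"
      using i by (simp add: Zval sum_ei tendsto_PInfty_eq_at_top)
    from filterlim_tendsto_add_at_top[OF tendsto_minus[OF L] this]
    show ?thesis by simp
  qed
  have bC: "((\<lambda>n. b i n / b (i - 1) n) \<longlongrightarrow> 0) sequentially" if i: "i \<in> {2..j}" for i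
  proof (rule tendstoI)
    fix \<epsilon> :: real assume e: "\<epsilon> > 0"
    define t where "t = (\<lambda>k. ei i k + (- \<epsilon>) * ei (i - 1) k)"
    have "Z t \<in> Hflat \<eta> \<delta> (i - 1 - 1)"
      unfolding Hflat_def
    proof (intro CollectI ballI)
      fix k assume k: "k \<in> {1..i - 1 - 1}"
      then have k': "k \<in> {1..p}" "k \<le> j" "k \<noteq> i" "k \<noteq> i - 1" using i j_le by auto
      show "Z t \<bullet> \<eta> k = \<delta> k" using k' by (simp add: ZH t_def ei_def)
    qed
    moreover have "Z t \<bullet> \<eta> (i - 1) = \<delta> (i - 1) - \<epsilon>"
    proof -
      have k': "i - 1 \<in> {1..p}" "i - 1 \<le> j" "i - 1 \<noteq> i" using i j_le by auto
      then show ?thesis by (simp add: ZH t_def ei_def)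
    qed
    ultimately have "Z t \<in> Cminus \<eta> \<delta> (i - 1)"
      using e by (simp add: Cminus_def)
    then have "h (Z t) = -\<infinity>" using h_minus i by (subgoal_tac "i - 1 \<in> {1..j}") auto
    then have "((\<lambda>n. ereal (hn n (Z t))) \<longlongrightarrow> -\<infinity>) sequentially"
      using hn_lim[rule_format, of "Z t"] by simp
    moreover have "hn n (Z t) = a n + b i n - \<epsilon> * b (i - 1) n" for n
    proof -
      have sp: "(\<Sum>k\<in>S. b k n * t k) = (\<Sum>k\<in>S. b k n * ei i k) - \<epsilon> * (\<Sum>k\<in>S. b k n * ei (i - 1) k)" for S
        by (simp add: t_def algebra_simps sum_subtractf sum_distrib_left)
      have "(\<Sum>k=1..j. b k n * t k) = b i n - \<epsilon> * b (i - 1) n"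
        unfolding sp using i by (simp add: sum_ei; arith)
      moreover have "(\<Sum>k\<in>{j+1..p}. b k n * t k) = 0"
        unfolding sp using i by (simp add: sum_ei; arith)
      ultimately show ?thesis by (simp add: Zval)
    qed
    ultimately have "eventually (\<lambda>n. a n + b i n - \<epsilon> * b (i - 1) n < L - 1) sequentially"
      unfolding tendsto_MInfty by auto
    moreover have "eventually (\<lambda>n. a n > L - 1) sequentially"
      using L by (rule order_tendstoD) simp
    moreover have "eventually (\<lambda>n. b i n > 0) sequentially"
      using aC[of i] i by (auto simp: filterlim_at_top_dense)
    moreover have "eventually (\<lambda>n. b (i - 1) n > 0) sequentially"
      using aC[of "i - 1"] i by (subgoal_tac "i - 1 \<in> {1..j}") (auto simp: filterlim_at_top_dense)
    ultimately show "eventually (\<lambda>n. dist (b i n / b (i - 1) n) 0 < \<epsilon>) sequentially"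
    proof eventually_elim
      case (elim n)
      then have "b i n < \<epsilon> * b (i - 1) n" by linarith
      then show ?case using elim by (simp add: field_simps)
    qed
  qed
  show ?thesis
    apply (rule exI[of _ a], rule exI[of _ b])
    using form aC bC cC L convergent_def by blast
qed

end
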